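(* Let $G$ be the two-player game with $A_1=\{\text{Faithful},\text{Philandering}\}$, $A_2=\{\text{Coy},\text{Fast}\}$ and fitness vectors $\pi(\text{Faithful},\text{Coy})=(2,2)$, $\pi(\text{Faithful},\text{Fast})=(5,5)$, $\pi(\text{Philandering},\text{Coy})=(0,0)$, $\pi(\text{Philandering},\text{Fast})=(15,-5)$. Then the pure strategy profile $(\text{Faithful},\text{Fast})$ is stable under perfect observability.
   Context: Preference types: $\Theta=\mathbb{R}^A$, $A=A_1\times A_2$ (utility functions on $A$, extended bilinearly to mixed profiles). $\mathcal{M}(\Theta^2)$ is the set of product distributions $\mu=\mu_1\times\mu_2$ on $\Theta^2$ with finitely supported marginals; $\operatorname{supp}\mu=\operatorname{supp}\mu_1\times\operatorname{supp}\mu_2$, $\mu_{-i}=\mu_j$ ($j\neq i$). Mutants: for nonempty $J\subseteq\{1,2\}$, a mutant sub-profile is $\tilde\theta_J\in\prod_{j\in J}(\Theta\setminus\operatorname{supp}\mu_j)$ with shares $\varepsilon\in(0,1)^{|J|}$, $\|\varepsilon\|=\max_j\varepsilon_j$; post-entry $\tilde\mu^\varepsilon_i=(1-\varepsilon_i)\mu_i+\varepsilon_i\delta_{\tilde\theta_i}$ for $i\in J$, $\tilde\mu^\varepsilon_i=\mu_i$ otherwise. Perfect observability: an equilibrium is a map $b:\operatorname{supp}\mu\to\Delta(A_1)\times\Delta(A_2)$ such that each $b(\theta)$ is a Nash equilibrium of the game with payoffs $\theta_1,\theta_2$; $B_1(\mu)$ is the set of these; $(\mu,b)$ is a configuration,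 with aggregate outcome $\varphi_{\mu,b}(a)=\sum_{\theta}\mu(\theta)\prod_i b_i(\theta)(a_i)$. Average fitness $\Pi_{\theta_i}(\mu;b)=\sum_{\theta'_{-i}}\mu_{-i}(\theta'_{-i})\pi_i(b(\theta_i,\theta'_{-i}))$. Balanced: equal average fitness of all types within each population. Focal set $B_1(\tilde\mu^\varepsilon;b)=\{\tilde b\in B_1(\tilde\mu^\varepsilon):\tilde b=b\text{ on }\operatorname{supp}\mu\}$. $(\mu,b)$ is stable if balanced and for every nonempty $J$ and every $\tilde\theta_J$ there is $\bar\epsilon\in(0,1)$ such that for all $\varepsilon$ with $\|\varepsilon\|<\bar\epsilon$ and all $\tilde b$ in the focal set, either (i) some $j\in J$ has $\Pi_{\theta_j}(\tilde\mu^\varepsilon;\tilde b)>\Pi_{\tilde\theta_j}(\tilde\mu^\varepsilon;\tilde b)$ for all $\theta_j\in\operatorname{supp}\mu_j$, or (ii) for every $i$ all types in $\operatorname{supp}\tilde\mu^\varepsilon_i$ have equal average fitness. A profile $\sigma$ is stable if $\varphi_\sigma(a)=\prod_i\sigma_i(a_i)$ is the aggregate outcome of a stable configuration. *)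

theory Defs
  imports Complex_Main
begin

text \<open>Players are indexed 1 and 2 (naturals).\<close>

type_synonym ('a1, 'a2) ptype = "'a1 \<times> 'a2 \<Rightarrow> real"
type_synonym ('a1, 'a2) pdist = "('a1, 'a2) ptype \<Rightarrow> real"
type_synonym ('a1, 'a2) pop = "nat \<Rightarrow> ('a1, 'a2) pdist"
type_synonym ('a1, 'a2) mprof = "('a1 \<Rightarrow> real) \<times> ('a2 \<Rightarrow> real)"
type_synonym ('a1, 'a2) behav = "('a1, 'a2) ptype \<times> ('a1, 'a2) ptype \<Rightarrow> ('a1, 'a2) mprof"

definition is_mixed :: "('a::finite \<Rightarrow> real) \<Rightarrow> bool" where
  "is_mixed s \<longleftrightarrow> (\<forall>a. 0 \<le> s a) \<and> sum s UNIV = 1"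

definition U :: "('a1::finite \<times> 'a2::finite \<Rightarrow> real) \<Rightarrow> ('a1 \<Rightarrow> real) \<Rightarrow> ('a2 \<Rightarrow> real) \<Rightarrow> real" where
  "U u s1 s2 = (\<Sum>a1\<in>UNIV. \<Sum>a2\<in>UNIV. s1 a1 * s2 a2 * u (a1, a2))"

definition nash :: "('a1::finite, 'a2::finite) ptype \<Rightarrow> ('a1, 'a2) ptype \<Rightarrow> ('a1, 'a2) mprof \<Rightarrow> bool" where
  "nash th1 th2 s \<longleftrightarrow> is_mixed (fst s) \<and> is_mixed (snd s) \<and>
     (\<forall>t1. is_mixed t1 \<longrightarrow> U th1 t1 (snd s) \<le> U th1 (fst s) (snd s)) \<and>
     (\<forall>t2. is_mixed t2 \<longrightarrow> U th2 (fst s) t2 \<le> U th2 (fst s) (snd s))"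

definition supp :: "('a1, 'a2) pdist \<Rightarrow> ('a1, 'a2) ptype set" where
  "supp d = {th. 0 < d th}"

definition valid_dist :: "('a1, 'a2) pdist \<Rightarrow> bool" where
  "valid_dist d \<longleftrightarrow> (\<forall>th. 0 \<le> d th) \<and> finite (supp d) \<and> sum d (supp d) = 1"

text \<open>mu in M(Theta^2): product of two finitely supported marginals mu 1, mu 2.\<close>
definition valid_pop :: "('a1, 'a2) pop \<Rightarrow> bool" where
  "valid_pop mu \<longleftrightarrow> valid_dist (mu 1) \<and> valid_dist (mu 2)"

text \<open>b in B_1(mu): at each type pair in supp mu, b gives a Nash equilibrium of
the game with payoffs th1, th2. Values of b outside supp mu are irrelevant.\<close>
definition is_equilibrium :: "('a1::finite, 'a2::finite) pop \<Rightarrow> ('a1, 'a2) behav \<Rightarrow> bool" where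
  "is_equilibrium mu b \<longleftrightarrow>
     (\<forall>th1\<in>supp (mu 1). \<forall>th2\<in>supp (mu 2). nash th1 th2 (b (th1, th2)))"

definition fit :: "('a1::finite \<times> 'a2::finite \<Rightarrow> real \<times> real) \<Rightarrow> nat \<Rightarrow> ('a1, 'a2) mprof \<Rightarrow> real" where
  "fit g i s = (if i = 1 then U (\<lambda>a. fst (g a)) (fst s) (snd s)
                          else U (\<lambda>a. snd (g a)) (fst s) (snd s))"

definition avg_fit :: "('a1::finite \<times> 'a2::finite \<Rightarrow> real \<times> real) \<Rightarrow> ('a1, 'a2) pop \<Rightarrow> ('a1, 'a2) behav
     \<Rightarrow> nat \<Rightarrow> ('a1, 'a2) ptype \<Rightarrow> real" where
  "avg_fit g mu b i th =
     (if i = 1 then (\<Sum>th2\<in>supp (mu 2). mu 2 th2 * fit g 1 (b (th, th2)))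
      else (\<Sum>th1\<in>supp (mu 1). mu 1 th1 * fit g 2 (b (th1, th))))"

definition balanced :: "('a1::finite \<times> 'a2::finite \<Rightarrow> real \<times> real) \<Rightarrow> ('a1, 'a2) pop \<Rightarrow> ('a1, 'a2) behav \<Rightarrow> bool" where
  "balanced g mu b \<longleftrightarrow>
     (\<forall>i\<in>{1,2}. \<forall>th\<in>supp (mu i). \<forall>th'\<in>supp (mu i). avg_fit g mu b i th = avg_fit g mu b i th')"

definition post_entry :: "('a1, 'a2) pop \<Rightarrow> nat set \<Rightarrow> (nat \<Rightarrow> ('a1, 'a2) ptype) \<Rightarrow> (nat \<Rightarrow> real) \<Rightarrow> ('a1, 'a2) pop" where
  "post_entry mu J thm eps = (\<lambda>i. if i \<in> J
       then (\<lambda>th. (1 - eps i) * mu i th + eps i * (if th = thm i then 1 else 0))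
       else mu i)"

definition focal :: "('a1::finite, 'a2::finite) pop \<Rightarrow> ('a1, 'a2) pop \<Rightarrow> ('a1, 'a2) behav \<Rightarrow> ('a1, 'a2) behav \<Rightarrow> bool" where
  "focal mu mu' b bt \<longleftrightarrow> is_equilibrium mu' bt \<and>
     (\<forall>th1\<in>supp (mu 1). \<forall>th2\<in>supp (mu 2). bt (th1, th2) = b (th1, th2))"

definition stable_config :: "('a1::finite \<times> 'a2::finite \<Rightarrow> real \<times> real) \<Rightarrow> ('a1, 'a2) pop \<Rightarrow> ('a1, 'a2) behav \<Rightarrow> bool" where
  "stable_config g mu b \<longleftrightarrow>
     valid_pop mu \<and> is_equilibrium mu b \<and> balanced g mu b \<and>
     (\<forall>J thm. J \<subseteq> {1,2} \<and> J \<noteq> {} \<and> (\<forall>j\<in>J. thm j \<notin> supp (mu j)) \<longrightarrow>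
        (\<exists>ebar. 0 < ebar \<and> ebar < 1 \<and>
          (\<forall>eps. (\<forall>j\<in>J. 0 < eps j \<and> eps j < 1) \<and> Max (eps ` J) < ebar \<longrightarrow>
             (\<forall>bt. focal mu (post_entry mu J thm eps) b bt \<longrightarrow>
                (\<exists>j\<in>J. \<forall>th\<in>supp (mu j).
                    avg_fit g (post_entry mu J thm eps) bt j th
                      > avg_fit g (post_entry mu J thm eps) bt j (thm j))
                \<or> (\<forall>i\<in>{1,2}. \<forall>th\<in>supp (post_entry mu J thm eps i).
                     \<forall>th'\<in>supp (post_entry mu J thm eps i).
                     avg_fit g (post_entry mu J thm eps) bt i th
                       = avg_fit g (post_entry mu J thm eps) bt i th')))))"

definition outcome :: "('a1::finite, 'a2::finite) pop \<Rightarrow> ('a1, 'a2) behav \<Rightarrow> 'a1 \<times> 'a2 \<Rightarrow> real" where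
  "outcome mu b a = (\<Sum>th\<in>supp (mu 1) \<times> supp (mu 2).
      mu 1 (fst th) * mu 2 (snd th) * fst (b th) (fst a) * snd (b th) (snd a))"

definition stable_profile :: "('a1::finite \<times> 'a2::finite \<Rightarrow> real \<times> real) \<Rightarrow> ('a1 \<Rightarrow> real) \<Rightarrow> ('a2 \<Rightarrow> real) \<Rightarrow> bool" where
  "stable_profile g s1 s2 \<longleftrightarrow>
     (\<exists>mu b. stable_config g mu b \<and> (\<forall>a1 a2. outcome mu b (a1, a2) = s1 a1 * s2 a2))"

datatype A1 = Faithful | Philandering
datatype A2 = Coy | Fast

lemma UNIV_A1: "(UNIV :: A1 set) = {Faithful, Philandering}"
  using A1.exhaust by auto
lemma UNIV_A2: "(UNIV :: A2 set) = {Coy, Fast}"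
  using A2.exhaust by auto

instance A1 :: finite by standard (simp add: UNIV_A1)
instance A2 :: finite by standard (simp add: UNIV_A2)

fun courtship :: "A1 \<times> A2 \<Rightarrow> real \<times> real" where
  "courtship (Faithful, Coy) = (2, 2)"
| "courtship (Faithful, Fast) = (5, 5)"
| "courtship (Philandering, Coy) = (0, 0)"
| "courtship (Philandering, Fast) = (15, -5)"

end

theory Submission
  imports Defs
begin



lemma key:
  fixes e1 e2 x w u y :: real
  assumes "0<e1" "e1<1/4" "0<e2" "e2<1/4" "x \<le> 5" "w \<le> 5" "u \<le> 5" "y + u \<le> 10"
  shows "(1-e2)*5 + e2*w - ((1-e2)*x + e2*y) > 0 \<or> (1-e1)*5 + e1*x - ((1-e1)*w + e1*u) > 0
    \<or> ((1-e2)*5 + e2*w - ((1-e2)*x + e2*y) = 0 \<and> (1-e1)*5 + e1*x - ((1-e1)*w + e1*u) = 0)"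
proof (rule ccontr)
  assume H: "\<not> ?thesis"
  define a where "a = 5 - x"
  define c where "c = 5 - w"
  define r where "r = 5 - u"
  have a0: "a \<ge> 0" "c \<ge> 0" "r \<ge> 0" "y - 5 \<le> r" using assms by (auto simp: a_def c_def r_def)
  have D1: "(1-e2)*5 + e2*w - ((1-e2)*x + e2*y) = (1-e2)*a - e2*c - e2*(y-5)"
    by (simp add: a_def c_def algebra_simps)
  have D2: "(1-e1)*5 + e1*x - ((1-e1)*w + e1*u) = (1-e1)*c + e1*(r-a)"
    by (simp add: a_def c_def r_def algebra_simps)
  have d1: "(1-e2)*a - e2*c - e2*(y-5) \<le> 0" and d2: "(1-e1)*c + e1*(r-a) \<le> 0"
    using H D1 D2 by linarith+
  have "(1-e1)*c \<ge> 0" using a0 assms by simp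
  hence "e1*r \<le> e1*a" using d2 by (simp add: algebra_simps)
  hence ra: "r \<le> a" using assms(1) by simp
  have "e1*r \<ge> 0" using a0 assms by simp
  hence "(1-e1)*c \<le> e1*a" using d2 by (simp add: algebra_simps)
  moreover have "e1*a \<le> (1-e1)*a" using a0 assms by (intro mult_right_mono) auto
  ultimately have "(1-e1)*c \<le> (1-e1)*a" by linarith
  hence ca: "c \<le> a" using assms by simp
  have "e2*(y-5) \<le> e2*r" using a0 assms by (intro mult_left_mono) auto
  hence "(1-e2)*a - e2*c - e2*r \<le> 0" using d1 by linarith
  moreover have "e2*c \<le> e2*a" "e2*r \<le> e2*a" using ca ra assms by (auto intro: mult_left_mono)
  ultimately have "(1-3*e2)*a \<le> 0" by (simp add: algebra_simps)
  moreover have "1-3*e2 > 0" using assms by simp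
  ultimately have "a \<le> 0" by (simp add: mult_le_0_iff)
  hence az: "a = 0" "c = 0" "r = 0" using a0 ca ra by auto
  have "e2*(y-5) \<le> 0" using \<open>e2*(y-5) \<le> e2*r\<close> az by simp
  hence "(1-e2)*a - e2*c - e2*(y-5) \<ge> 0" using az by simp
  thus False using H D1 D2 d1 az by simp
qed




lemma U_exp: "U u s1 s2 = s1 Faithful * s2 Coy * u (Faithful, Coy) + s1 Faithful * s2 Fast * u (Faithful, Fast)
  + s1 Philandering * s2 Coy * u (Philandering, Coy) + s1 Philandering * s2 Fast * u (Philandering, Fast)"
  unfolding U_def UNIV_A1 UNIV_A2 by simp

lemma mixed1: "is_mixed (s::A1 \<Rightarrow> real) \<longleftrightarrow> 0 \<le> s Faithful \<and> 0 \<le> s Philandering \<and> s Faithful + s Philandering = 1"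
  unfolding is_mixed_def UNIV_A1 by (auto, metis A1.exhaust)

lemma mixed2: "is_mixed (s::A2 \<Rightarrow> real) \<longleftrightarrow> 0 \<le> s Coy \<and> 0 \<le> s Fast \<and> s Coy + s Fast = 1"
  unfolding is_mixed_def UNIV_A2 by (auto, metis A2.exhaust)

lemma fit1: "fit courtship 1 s = 2 * fst s Faithful * snd s Coy + 5 * fst s Faithful * snd s Fast + 15 * fst s Philandering * snd s Fast"
  unfolding fit_def U_exp by simp

lemma fit2: "fit courtship 2 s = 2 * fst s Faithful * snd s Coy + 5 * fst s Faithful * snd s Fast - 5 * fst s Philandering * snd s Fast"
  unfolding fit_def U_exp by simp

lemma fit_bounds:
  assumes "is_mixed (fst s)" "is_mixed (snd s)"
  shows "fit courtship 2 s \<le> 5" "fit courtship 1 s + fit courtship 2 s \<le> 10"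
proof -
  have m: "0 \<le> fst s Faithful" "0 \<le> fst s Philandering" "fst s Faithful + fst s Philandering = 1"
     "0 \<le> snd s Coy" "0 \<le> snd s Fast" "snd s Coy + snd s Fast = 1"
    using assms by (auto simp: mixed1 mixed2)
  have e: "fst s Faithful * snd s Coy + fst s Faithful * snd s Fast + fst s Philandering * snd s Coy
     + fst s Philandering * snd s Fast = 1"
  proof -
    have "(fst s Faithful + fst s Philandering) * (snd s Coy + snd s Fast) = 1" using m(3,6) by simp
    thus ?thesis by (simp add: algebra_simps)
  qed
  have "0 \<le> fst s Faithful * snd s Coy" "0 \<le> fst s Faithful * snd s Fast" "0 \<le> fst s Philandering * snd s Coy"
    "0 \<le> fst s Philandering * snd s Fast" using m by auto
  thus "fit courtship 2 s \<le> 5" "fit courtship 1 s + fit courtship 2 s \<le> 10"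
    unfolding fit1 fit2 using e by linarith+
qed

lemma fit_eq:
  assumes "fst s Philandering * snd s Fast = 0"
  shows "fit courtship 1 s = fit courtship 2 s"
  using assms unfolding fit1 fit2 by simp

definition th1 :: "(A1, A2) ptype" where "th1 = (\<lambda>a. if fst a = Faithful then 1 else 0)"
definition th2 :: "(A1, A2) ptype" where "th2 = (\<lambda>a. if a = (Philandering, Coy) then 1 else 0)"

lemma nash_th1: assumes "nash th1 t s" shows "fst s Philandering * snd s Fast = 0"
proof -
  have m: "0 \<le> fst s Faithful" "0 \<le> fst s Philandering" "fst s Faithful + fst s Philandering = 1"
     "0 \<le> snd s Coy" "0 \<le> snd s Fast" "snd s Coy + snd s Fast = 1"
    using assms by (auto simp: nash_def mixed1 mixed2)
  have "is_mixed (\<lambda>a::A1. if a = Faithful then 1 else 0)" by (simp add: mixed1)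
  hence "U th1 (\<lambda>a::A1. if a = Faithful then 1 else 0) (snd s) \<le> U th1 (fst s) (snd s)"
    using assms by (auto simp: nash_def)
  hence "snd s Coy + snd s Fast \<le> fst s Faithful * snd s Coy + fst s Faithful * snd s Fast"
    by (simp add: U_exp th1_def)
  hence "1 \<le> fst s Faithful" using m by (simp add: distrib_left[symmetric])
  hence "fst s Philandering = 0" using m by linarith
  thus ?thesis by simp
qed

lemma nash_th2: assumes "nash t th2 s" shows "fst s Philandering * snd s Fast = 0"
proof -
  have m: "0 \<le> fst s Faithful" "0 \<le> fst s Philandering" "fst s Faithful + fst s Philandering = 1"
     "0 \<le> snd s Coy" "0 \<le> snd s Fast" "snd s Coy + snd s Fast = 1"
    using assms by (auto simp: nash_def mixed1 mixed2)
  have "is_mixed (\<lambda>a::A2. if a = Coy then 1 else 0)" by (simp add: mixed2)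
  hence "U th2 (fst s) (\<lambda>a::A2. if a = Coy then 1 else 0) \<le> U th2 (fst s) (snd s)"
    using assms by (auto simp: nash_def)
  hence "fst s Philandering \<le> fst s Philandering * snd s Coy"
    by (simp add: U_exp th2_def)
  moreover have "snd s Coy = 1 - snd s Fast" using m by simp
  ultimately have "fst s Philandering * snd s Fast \<le> 0" by (simp add: algebra_simps)
  thus ?thesis using m by (metis mult_nonneg_nonneg order_antisym)
qed




definition thI :: "nat \<Rightarrow> (A1, A2) ptype" where "thI i = (if i = 1 then th1 else th2)"
definition mu0 :: "(A1, A2) pop" where "mu0 = (\<lambda>i t. if t = thI i then 1 else 0)"
definition b0 :: "(A1, A2) behav" where
  "b0 = (\<lambda>_. ((\<lambda>a. if a = Faithful then 1 else 0), (\<lambda>a. if a = Fast then 1 else 0)))"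

lemma th12: "th1 \<noteq> th2"
proof
  assume "th1 = th2"
  hence "th1 (Faithful, Coy) = th2 (Faithful, Coy)" by simp
  thus False by (simp add: th1_def th2_def)
qed

lemma supp_mu0: "supp (mu0 i) = {thI i}"
  by (auto simp: supp_def mu0_def)

lemma post_val: "post_entry mu0 J mt eps i t =
   (if i \<in> J then (1 - eps i) * (if t = thI i then 1 else 0) + eps i * (if t = mt i then 1 else 0)
    else (if t = thI i then 1 else 0))"
  by (simp add: post_entry_def mu0_def)

lemma post_supp:
  assumes "i \<in> J \<Longrightarrow> 0 < eps i \<and> eps i < 1" "i \<in> J \<Longrightarrow> mt i \<noteq> thI i"
  shows "supp (post_entry mu0 J mt eps i) = (if i \<in> J then {thI i, mt i} else {thI i})"
  using assms by (auto simp: supp_def post_val split: if_splits)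

lemma avg1:
  assumes "2 \<in> J \<Longrightarrow> 0 < eps 2 \<and> eps 2 < 1" "2 \<in> J \<Longrightarrow> mt 2 \<noteq> thI 2"
  shows "avg_fit g (post_entry mu0 J mt eps) bt 1 t =
    (if 2 \<in> J then (1 - eps 2) * fit g 1 (bt (t, th2)) + eps 2 * fit g 1 (bt (t, mt 2))
     else fit g 1 (bt (t, th2)))"
proof (cases "2 \<in> J")
  case True
  then show ?thesis using assms post_supp[of 2 J eps mt]
    by (simp add: avg_fit_def post_val thI_def)
next
  case False
  then show ?thesis using post_supp[of 2 J eps mt]
    by (simp add: avg_fit_def post_val thI_def)
qed

lemma avg2:
  assumes "1 \<in> J \<Longrightarrow> 0 < eps 1 \<and> eps 1 < 1" "1 \<in> J \<Longrightarrow> mt 1 \<noteq> thI 1"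
  shows "avg_fit g (post_entry mu0 J mt eps) bt 2 t =
    (if 1 \<in> J then (1 - eps 1) * fit g 2 (bt (th1, t)) + eps 1 * fit g 2 (bt (mt 1, t))
     else fit g 2 (bt (th1, t)))"
proof (cases "1 \<in> J")
  case True
  then show ?thesis using assms post_supp[of 1 J eps mt]
    by (simp add: avg_fit_def post_val thI_def)
next
  case False
  then show ?thesis using post_supp[of 1 J eps mt]
    by (simp add: avg_fit_def post_val thI_def)
qed

lemma nash_b0: "nash th1 th2 (b0 x)"
  unfolding nash_def b0_def by (auto simp: mixed1 mixed2 U_exp th1_def th2_def)

lemma fit_b0: "fit courtship 1 (b0 x) = 5" "fit courtship 2 (b0 x) = 5"
  by (simp_all add: fit_def U_exp b0_def)




lemma main_cond:
  assumes J: "J \<subseteq> {1,2}" "J \<noteq> {}" and mt: "\<forall>j\<in>J. mt j \<notin> supp (mu0 j)"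
    and eps: "\<forall>j\<in>J. 0 < eps j \<and> eps j < 1" "Max (eps ` J) < 1/4"
    and foc: "focal mu0 (post_entry mu0 J mt eps) b0 bt"
  shows "(\<exists>j\<in>J. \<forall>th\<in>supp (mu0 j).
                    avg_fit courtship (post_entry mu0 J mt eps) bt j th
                      > avg_fit courtship (post_entry mu0 J mt eps) bt j (mt j))
                \<or> (\<forall>i\<in>{1,2}. \<forall>th\<in>supp (post_entry mu0 J mt eps i).
                     \<forall>th'\<in>supp (post_entry mu0 J mt eps i).
                     avg_fit courtship (post_entry mu0 J mt eps) bt i th
                       = avg_fit courtship (post_entry mu0 J mt eps) bt i th')"
proof -
  let ?P = "post_entry mu0 J mt eps"
  let ?A = "avg_fit courtship ?P bt"
  have finJ: "finite J" using J(1) finite_subset by blast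
  have epsq: "\<And>j. j \<in> J \<Longrightarrow> eps j < 1/4"
    using eps(2) Max_ge[OF finite_imageI[OF finJ]] by (meson imageI le_less_trans)
  have mtn: "\<And>j. j \<in> J \<Longrightarrow> mt j \<noteq> thI j" using mt by (auto simp: supp_mu0)
  have h1: "1 \<in> J \<Longrightarrow> 0 < eps 1 \<and> eps 1 < 1" "1 \<in> J \<Longrightarrow> mt 1 \<noteq> thI 1"
    and h2: "2 \<in> J \<Longrightarrow> 0 < eps 2 \<and> eps 2 < 1" "2 \<in> J \<Longrightarrow> mt 2 \<noteq> thI 2"
    using eps mtn by auto
  have S1: "supp (?P 1) = (if 1 \<in> J then {th1, mt 1} else {th1})"
    using post_supp[of 1 J eps mt] h1 by (simp add: thI_def)
  have S2: "supp (?P 2) = (if 2 \<in> J then {th2, mt 2} else {th2})"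
    using post_supp[of 2 J eps mt] h2 by (simp add: thI_def)
  have NE: "\<And>t1 t2. t1 \<in> supp (?P 1) \<Longrightarrow> t2 \<in> supp (?P 2) \<Longrightarrow> nash t1 t2 (bt (t1, t2))"
    using foc by (simp add: focal_def is_equilibrium_def)
  have bt0: "bt (th1, th2) = b0 (th1, th2)"
    using foc by (simp add: focal_def supp_mu0 thI_def)
  have f0: "fit courtship 1 (bt (th1, th2)) = 5" "fit courtship 2 (bt (th1, th2)) = 5"
    using bt0 fit_b0 by simp_all
  have mixedNE: "\<And>t1 t2 s. nash t1 t2 s \<Longrightarrow> is_mixed (fst s) \<and> is_mixed (snd s)"
    by (simp add: nash_def)
  have A1: "\<And>t. ?A 1 t = (if 2 \<in> J then (1 - eps 2) * fit courtship 1 (bt (t, th2)) + eps 2 * fit courtship 1 (bt (t, mt 2))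
     else fit courtship 1 (bt (t, th2)))"
    using avg1[where J=J and eps=eps and mt=mt, OF h2] by blast
  have A2: "\<And>t. ?A 2 t = (if 1 \<in> J then (1 - eps 1) * fit courtship 2 (bt (th1, t)) + eps 1 * fit courtship 2 (bt (mt 1, t))
     else fit courtship 2 (bt (th1, t)))"
    using avg2[where J=J and eps=eps and mt=mt, OF h1] by blast
  have sm1: "supp (mu0 1) = {th1}" "supp (mu0 2) = {th2}" by (simp_all add: supp_mu0 thI_def)
  have X: "1 \<in> J \<Longrightarrow> fit courtship 1 (bt (mt 1, th2)) = fit courtship 2 (bt (mt 1, th2))
        \<and> fit courtship 1 (bt (mt 1, th2)) \<le> 5"
  proof -
    assume "1 \<in> J"
    hence n: "nash (mt 1) th2 (bt (mt 1, th2))" using NE S1 S2 by simp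
    show ?thesis using fit_eq[OF nash_th2[OF n]] fit_bounds(1) mixedNE[OF n] by simp
  qed
  have W: "2 \<in> J \<Longrightarrow> fit courtship 1 (bt (th1, mt 2)) = fit courtship 2 (bt (th1, mt 2))
        \<and> fit courtship 2 (bt (th1, mt 2)) \<le> 5"
  proof -
    assume "2 \<in> J"
    hence n: "nash th1 (mt 2) (bt (th1, mt 2))" using NE S1 S2 by simp
    show ?thesis using fit_eq[OF nash_th1[OF n]] fit_bounds(1) mixedNE[OF n] by simp
  qed
  have Jc: "J = {1} \<or> J = {2} \<or> J = {1,2}" using J by auto
  moreover
  { assume JJ: "J = {1}"
    have "?A 1 th1 = 5" "?A 1 (mt 1) = fit courtship 1 (bt (mt 1, th2))"
      using A1 f0 JJ by simp_all
    hence "?A 1 th1 > ?A 1 (mt 1) \<or> ?A 1 th1 = ?A 1 (mt 1)" using X JJ by auto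
    hence ?thesis using JJ S1 S2 sm1 by auto }
  moreover
  { assume JJ: "J = {2}"
    have "?A 2 th2 = 5" "?A 2 (mt 2) = fit courtship 2 (bt (th1, mt 2))"
      using A2 f0 JJ by simp_all
    hence "?A 2 th2 > ?A 2 (mt 2) \<or> ?A 2 th2 = ?A 2 (mt 2)" using W JJ by auto
    hence ?thesis using JJ S1 S2 sm1 by auto }
  moreover
  { assume JJ: "J = {1,2}"
    define x where "x = fit courtship 1 (bt (mt 1, th2))"
    define w where "w = fit courtship 2 (bt (th1, mt 2))"
    define y where "y = fit courtship 1 (bt (mt 1, mt 2))"
    define u where "u = fit courtship 2 (bt (mt 1, mt 2))"
    have n: "nash (mt 1) (mt 2) (bt (mt 1, mt 2))" using NE S1 S2 JJ by simp
    have yu: "u \<le> 5" "y + u \<le> 10" using fit_bounds mixedNE[OF n] by (auto simp: u_def y_def)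
    have xw: "x \<le> 5" "w \<le> 5" "fit courtship 2 (bt (mt 1, th2)) = x" "fit courtship 1 (bt (th1, mt 2)) = w"
      using X W JJ by (auto simp: x_def w_def)
    have e: "0 < eps 1" "eps 1 < 1/4" "0 < eps 2" "eps 2 < 1/4" using eps epsq JJ by auto
    have a: "?A 1 th1 = (1-eps 2)*5 + eps 2*w" "?A 1 (mt 1) = (1-eps 2)*x + eps 2*y"
      "?A 2 th2 = (1-eps 1)*5 + eps 1*x" "?A 2 (mt 2) = (1-eps 1)*w + eps 1*u"
      using A1 A2 JJ f0 xw by (simp_all add: x_def y_def u_def w_def)
    have "(1-eps 2)*5 + eps 2*w - ((1-eps 2)*x + eps 2*y) > 0 \<or> (1-eps 1)*5 + eps 1*x - ((1-eps 1)*w + eps 1*u) > 0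
    \<or> ((1-eps 2)*5 + eps 2*w - ((1-eps 2)*x + eps 2*y) = 0 \<and> (1-eps 1)*5 + eps 1*x - ((1-eps 1)*w + eps 1*u) = 0)"
      using key[OF e xw(1,2) yu] .
    hence "?A 1 th1 > ?A 1 (mt 1) \<or> ?A 2 th2 > ?A 2 (mt 2) \<or> (?A 1 th1 = ?A 1 (mt 1) \<and> ?A 2 th2 = ?A 2 (mt 2))"
      unfolding a by linarith
    hence ?thesis using JJ S1 S2 sm1 by auto }
  ultimately show ?thesis by blast
qed

theorem mainTheorem6:
  shows "stable_profile courtship
           (\<lambda>a. if a = Faithful then 1 else 0)
           (\<lambda>a. if a = Fast then 1 else 0)"
  unfolding stable_profile_def
proof (intro exI conjI allI)
  show "stable_config courtship mu0 b0"
    unfolding stable_config_def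
  proof (intro conjI allI impI)
    show "valid_pop mu0"
      by (simp add: valid_pop_def valid_dist_def supp_mu0) (simp add: mu0_def)
    show "is_equilibrium mu0 b0"
      by (simp add: is_equilibrium_def supp_mu0 thI_def nash_b0)
    show "balanced courtship mu0 b0"
      by (simp add: balanced_def supp_mu0)
    fix J mt
    assume H: "J \<subseteq> {1, 2} \<and> J \<noteq> {} \<and> (\<forall>j\<in>J. mt j \<notin> supp (mu0 j))"
    show "\<exists>ebar>0. ebar < 1 \<and>
             (\<forall>eps. (\<forall>j\<in>J. 0 < eps j \<and> eps j < 1) \<and> Max (eps ` J) < ebar \<longrightarrow>
                    (\<forall>bt. focal mu0 (post_entry mu0 J mt eps) b0 bt \<longrightarrow>
                          (\<exists>j\<in>J. \<forall>th\<in>supp (mu0 j).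
                                    avg_fit courtship (post_entry mu0 J mt eps) bt j (mt j)
                                    < avg_fit courtship (post_entry mu0 J mt eps) bt j th) \<or>
                          (\<forall>i\<in>{1, 2}.
                              \<forall>th\<in>supp (post_entry mu0 J mt eps i).
                                 \<forall>th'\<in>supp (post_entry mu0 J mt eps i).
                                    avg_fit courtship (post_entry mu0 J mt eps) bt i th =
                                    avg_fit courtship (post_entry mu0 J mt eps) bt i th')))"
      using main_cond H by (intro exI[of _ "1/4"]) auto
  qed
  fix a1 a2
  show "outcome mu0 b0 (a1, a2) = (if a1 = Faithful then 1 else 0) * (if a2 = Fast then 1 else 0)"
    unfolding outcome_def supp_mu0 by (simp add: thI_def mu0_def b0_def)
qed


end
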